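(* Let $k\le n$ be positive integers and let $\mathbb F$ be a field with at least $n+k-1$ elements. Then $J_{n,k}\subseteq \mathbf T(Z_{n,k})$.
   Context: $\mathbb F[\mathbf x_n]=\mathbb F[x_1,\dots,x_n]$. $h_d(x_1,\dots,x_i)=\sum_{1\le j_1\le\cdots\le j_d\le i}x_{j_1}\cdots x_{j_d}$ is the complete homogeneous symmetric polynomial and $e_d(\mathbf x_n)=e_d(x_1,\dots,x_n)$ the elementary symmetric polynomial. $J_{n,k}\subseteq\mathbb F[\mathbf x_n]$ is the ideal generated by $h_k(x_1),h_k(x_1,x_2),\dots,h_k(x_1,\dots,x_n)$ and $e_n(\mathbf x_n),e_{n-1}(\mathbf x_n),\dots,e_{n-k+1}(\mathbf x_n)$. Fix distinct elements $\alpha_1,\dots,\alpha_{n+k-1}\in\mathbb F$. $Z_{n,k}\subseteq\mathbb F^n$ is the set of points $(z_1,\dots,z_n)$ such that $z_i\in\{\alpha_1,\dots,\alpha_{k+i-1}\}$ for each $1\le i\le n$, the coordinates $z_1,\dots,z_n$ are pairwise distinct, and $\{\alpha_1,\dots,\alpha_k\}\subseteq\{z_1,\dots,z_n\}$. For a finite $Z\subseteq\mathbb F^n$, $\mathbf I(Z)$ is the ideal of polynomials vanishing on $Z$; for nonzero $f$, $\tau(f)$ denotes its top-degree homogeneous component; and $\mathbf T(Z)$ is the ideal generated by $\{\tau(f): f\in\mathbf I(Z)\setminus\{0\}\}$. *)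

theory Defs
  imports Main "HOL-Library.Poly_Mapping"
begin

text \<open>Multivariate polynomials over a field, represented as finitely supported maps
from monomials (exponent vectors, finitely supported nat to nat maps) to coefficients.
The variable x_i is the monomial with exponent 1 at index i (indices 1..n).\<close>

type_synonym 'a mpoly = "(nat \<Rightarrow>\<^sub>0 nat) \<Rightarrow>\<^sub>0 'a"

definition Var :: "nat \<Rightarrow> 'a::comm_ring_1 mpoly" where
  "Var i = Poly_Mapping.single (Poly_Mapping.single i 1) 1"

definition mdeg :: "(nat \<Rightarrow>\<^sub>0 nat) \<Rightarrow> nat" where
  "mdeg m = (\<Sum>i\<in>Poly_Mapping.keys m. Poly_Mapping.lookup m i)"

definition Pn :: "nat \<Rightarrow> 'a::comm_ring_1 mpoly set" where
  "Pn n = {p. \<forall>m\<in>Poly_Mapping.keys p. Poly_Mapping.keys m \<subseteq> {1..n}}"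

definition ideal_gen :: "nat \<Rightarrow> 'a::comm_ring_1 mpoly set \<Rightarrow> 'a mpoly set" where
  "ideal_gen n S = {(\<Sum>g\<in>F. c g * g) | F c. finite F \<and> F \<subseteq> S \<and> (\<forall>g\<in>F. c g \<in> Pn n)}"

definition eval :: "'a::comm_ring_1 mpoly \<Rightarrow> (nat \<Rightarrow> 'a) \<Rightarrow> 'a" where
  "eval p z = (\<Sum>m\<in>Poly_Mapping.keys p. Poly_Mapping.lookup p m * (\<Prod>i\<in>Poly_Mapping.keys m. z i ^ Poly_Mapping.lookup m i))"

definition tdeg :: "'a::zero mpoly \<Rightarrow> nat" where
  "tdeg p = Max (mdeg ` Poly_Mapping.keys p)"

definition tau :: "'a::comm_ring_1 mpoly \<Rightarrow> 'a mpoly" where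
  "tau p = (\<Sum>m\<in>{m\<in>Poly_Mapping.keys p. mdeg m = tdeg p}. Poly_Mapping.single m (Poly_Mapping.lookup p m))"

definition hsym :: "nat \<Rightarrow> nat \<Rightarrow> 'a::comm_ring_1 mpoly" where
  "hsym d i = (\<Sum>m\<in>{m. Poly_Mapping.keys m \<subseteq> {1..i} \<and> mdeg m = d}. Poly_Mapping.single m 1)"

definition esym :: "nat \<Rightarrow> nat \<Rightarrow> 'a::comm_ring_1 mpoly" where
  "esym d n = (\<Sum>S\<in>{S. S \<subseteq> {1..n} \<and> card S = d}. (\<Prod>i\<in>S. Var i))"

definition J :: "nat \<Rightarrow> nat \<Rightarrow> 'a::comm_ring_1 mpoly set" where
  "J n k = ideal_gen n ((\<lambda>i. hsym k i) ` {1..n} \<union> (\<lambda>d. esym d n) ` {n-k+1..n})"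

text \<open>points of F^n are represented as functions nat \<Rightarrow> F, with coordinates 1..n,
  normalized to 0 outside {1..n}\<close>
definition Z :: "nat \<Rightarrow> nat \<Rightarrow> (nat \<Rightarrow> 'a) \<Rightarrow> (nat \<Rightarrow> 'a::field) set" where
  "Z n k \<alpha> = {z. (\<forall>i. i \<notin> {1..n} \<longrightarrow> z i = 0)
      \<and> (\<forall>i\<in>{1..n}. z i \<in> \<alpha> ` {1..k+i-1})
      \<and> inj_on z {1..n}
      \<and> \<alpha> ` {1..k} \<subseteq> z ` {1..n}}"

definition vanishing_ideal :: "nat \<Rightarrow> (nat \<Rightarrow> 'a) set \<Rightarrow> 'a::comm_ring_1 mpoly set" where
  "vanishing_ideal n Zs = {p\<in>Pn n. \<forall>z\<in>Zs. eval p z = 0}"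

definition T :: "nat \<Rightarrow> (nat \<Rightarrow> 'a) set \<Rightarrow> 'a::comm_ring_1 mpoly set" where
  "T n Zs = ideal_gen n (tau ` (vanishing_ideal n Zs - {0}))"

end

theory Submission
  imports Defs "HOL-Computational_Algebra.Formal_Power_Series"
begin

unbundle fps_syntax

definition mon :: "(nat \<Rightarrow>\<^sub>0 nat) \<Rightarrow> (nat \<Rightarrow> 'a::comm_ring_1) \<Rightarrow> 'a" where
  "mon m z = (\<Prod>i\<in>Poly_Mapping.keys m. z i ^ Poly_Mapping.lookup m i)"

lemma mon_superset:
  assumes "finite S" "Poly_Mapping.keys m \<subseteq> S"
  shows "mon m z = (\<Prod>i\<in>S. z i ^ Poly_Mapping.lookup m i)"
  unfolding mon_def
  by (rule prod.mono_neutral_left[OF assms(1) assms(2)]) (auto simp: in_keys_iff)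

lemma mon_add: "mon (a + b) z = mon a z * mon b z"
proof -
  let ?S = "Poly_Mapping.keys a \<union> Poly_Mapping.keys b"
  have "mon (a+b) z = (\<Prod>i\<in>?S. z i ^ Poly_Mapping.lookup (a+b) i)"
    by (rule mon_superset) (use keys_add[of a b] in auto)
  also have "\<dots> = (\<Prod>i\<in>?S. z i ^ Poly_Mapping.lookup a i) * (\<Prod>i\<in>?S. z i ^ Poly_Mapping.lookup b i)"
    by (simp add: lookup_add power_add prod.distrib)
  also have "\<dots> = mon a z * mon b z"
    using mon_superset[of ?S a z] mon_superset[of ?S b z] by simp
  finally show ?thesis .
qed

lemma mon_single [simp]: "mon (Poly_Mapping.single l j) z = z l ^ j"
  by (simp add: mon_def)

lemma mon_zero [simp]: "mon 0 z = 1"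
  by (simp add: mon_def)

lemma eval_mon: "eval p z = (\<Sum>m\<in>Poly_Mapping.keys p. Poly_Mapping.lookup p m * mon m z)"
  by (simp add: eval_def mon_def)

lemma eval_superset:
  assumes "finite S" "Poly_Mapping.keys p \<subseteq> S"
  shows "eval p z = (\<Sum>m\<in>S. Poly_Mapping.lookup p m * mon m z)"
  unfolding eval_mon
  by (rule sum.mono_neutral_left[OF assms(1) assms(2)]) (auto simp: in_keys_iff)

lemma eval_add: "eval (p + q) z = eval p z + eval q z"
proof -
  let ?S = "Poly_Mapping.keys p \<union> Poly_Mapping.keys q"
  have "eval (p+q) z = (\<Sum>m\<in>?S. Poly_Mapping.lookup (p+q) m * mon m z)"
    by (rule eval_superset) (use keys_add[of p q] in auto)
  also have "\<dots> = eval p z + eval q z"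
    using eval_superset[of ?S p z] eval_superset[of ?S q z]
    by (simp add: lookup_add distrib_right sum.distrib)
  finally show ?thesis .
qed

lemma eval_zero [simp]: "eval 0 z = 0"
  by (simp add: eval_def)

lemma eval_sum: "eval (\<Sum>i\<in>I. f i) z = (\<Sum>i\<in>I. eval (f i) z)"
  by (induction I rule: infinite_finite_induct) (auto simp: eval_add)

lemma eval_single [simp]: "eval (Poly_Mapping.single m c) z = c * mon m z"
  by (simp add: eval_mon)

lemma pm_expand: "p = (\<Sum>m\<in>Poly_Mapping.keys p. Poly_Mapping.single m (Poly_Mapping.lookup p m))"
proof (rule poly_mapping_eqI)
  fix k
  show "Poly_Mapping.lookup p k = Poly_Mapping.lookup (\<Sum>m\<in>Poly_Mapping.keys p. Poly_Mapping.single m (Poly_Mapping.lookup p m)) k"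
    by (cases "k \<in> Poly_Mapping.keys p") (auto simp: lookup_sum lookup_single when_def in_keys_iff)
qed

lemma eval_mult: "eval (p * q) z = eval p z * eval (q::'a::comm_ring_1 mpoly) z"
proof -
  have "p * q = (\<Sum>a\<in>Poly_Mapping.keys p. \<Sum>b\<in>Poly_Mapping.keys q.
      Poly_Mapping.single a (Poly_Mapping.lookup p a) * Poly_Mapping.single b (Poly_Mapping.lookup q b))"
    by (subst pm_expand[of p], subst pm_expand[of q]) (rule sum_product)
  then have "eval (p*q) z = (\<Sum>a\<in>Poly_Mapping.keys p. \<Sum>b\<in>Poly_Mapping.keys q.
      (Poly_Mapping.lookup p a * mon a z) * (Poly_Mapping.lookup q b * mon b z))"
    by (simp add: eval_sum mult_single mon_add algebra_simps)
  also have "\<dots> = eval p z * eval q z"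
    by (simp add: eval_mon sum_product)
  finally show ?thesis .
qed

lemma eval_one [simp]: "eval 1 z = 1"
  by (metis single_one eval_single mon_zero mult_1)

lemma eval_prod: "eval (\<Prod>i\<in>I. f i) z = (\<Prod>i\<in>I. eval (f i) z)"
  by (induction I rule: infinite_finite_induct) (simp_all add: eval_mult)

lemma eval_Var [simp]: "eval (Var i) z = z i"
  by (simp add: Var_def)

lemma mdeg_superset:
  assumes "finite S" "Poly_Mapping.keys m \<subseteq> S"
  shows "mdeg m = (\<Sum>i\<in>S. Poly_Mapping.lookup m i)"
  unfolding mdeg_def
  by (rule sum.mono_neutral_left[OF assms(1) assms(2)]) (auto simp: in_keys_iff)

lemma mdeg_add: "mdeg (a + b) = mdeg a + mdeg b"
proof -
  let ?S = "Poly_Mapping.keys a \<union> Poly_Mapping.keys b"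
  have "mdeg (a+b) = (\<Sum>i\<in>?S. Poly_Mapping.lookup (a+b) i)"
    by (rule mdeg_superset) (use keys_add[of a b] in auto)
  also have "\<dots> = mdeg a + mdeg b"
    using mdeg_superset[of ?S a] mdeg_superset[of ?S b]
    by (simp add: lookup_add sum.distrib)
  finally show ?thesis .
qed

lemma mdeg_single [simp]: "mdeg (Poly_Mapping.single l j) = j"
  by (simp add: mdeg_def)

lemma mdeg_zero [simp]: "mdeg 0 = 0"
  by (simp add: mdeg_def)

lemma keys_cmult: "Poly_Mapping.keys (Poly_Mapping.single 0 c * p) \<subseteq> Poly_Mapping.keys (p::'a::comm_ring_1 mpoly)"
proof
  fix x assume "x \<in> Poly_Mapping.keys (Poly_Mapping.single 0 c * p)"
  then obtain a b where "x = a + b" "a \<in> Poly_Mapping.keys (Poly_Mapping.single 0 c)" "b \<in> Poly_Mapping.keys p"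
    using keys_mult[of "Poly_Mapping.single 0 c" p] by blast
  then show "x \<in> Poly_Mapping.keys p" by (auto split: if_splits)
qed

lemma eval_cmult [simp]: "eval (Poly_Mapping.single 0 c * p) z = c * eval p z"
  by (simp add: eval_mult)

lemma tau_top:
  fixes g r :: "'a::comm_ring_1 mpoly"
  assumes g0: "g \<noteq> 0" and gh: "\<And>m. m \<in> Poly_Mapping.keys g \<Longrightarrow> mdeg m = d"
    and rl: "\<And>m. m \<in> Poly_Mapping.keys r \<Longrightarrow> mdeg m < d"
  shows "tau (g + r) = g \<and> g + r \<noteq> 0"
proof -
  have lr: "Poly_Mapping.lookup r m = 0" if "mdeg m = d" for m
    using rl[of m] that by (auto simp: in_keys_iff)
  have kg: "Poly_Mapping.keys g \<subseteq> Poly_Mapping.keys (g+r)"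
  proof
    fix m assume m: "m \<in> Poly_Mapping.keys g"
    then have "Poly_Mapping.lookup (g+r) m = Poly_Mapping.lookup g m"
      using lr gh by (simp add: lookup_add)
    then show "m \<in> Poly_Mapping.keys (g+r)" using m by (simp add: in_keys_iff)
  qed
  have kgr: "Poly_Mapping.keys (g+r) \<subseteq> Poly_Mapping.keys g \<union> Poly_Mapping.keys r"
    by (rule keys_add)
  obtain m0 where m0: "m0 \<in> Poly_Mapping.keys g" using g0 keys_eq_empty by blast
  have ne: "g + r \<noteq> 0" using kg m0 by auto
  have td: "tdeg (g+r) = d"
    unfolding tdeg_def
  proof (rule Max_eqI)
    show "finite (mdeg ` Poly_Mapping.keys (g + r))" by simp
    show "y \<le> d" if "y \<in> mdeg ` Poly_Mapping.keys (g + r)" for y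
      using that kgr gh rl by fastforce
    show "d \<in> mdeg ` Poly_Mapping.keys (g + r)" using m0 kg gh by force
  qed
  have st: "{m\<in>Poly_Mapping.keys (g+r). mdeg m = tdeg (g+r)} = Poly_Mapping.keys g"
    using td kg kgr gh rl by fastforce
  have "tau (g+r) = (\<Sum>m\<in>Poly_Mapping.keys g. Poly_Mapping.single m (Poly_Mapping.lookup (g+r) m))"
    unfolding tau_def st ..
  also have "\<dots> = (\<Sum>m\<in>Poly_Mapping.keys g. Poly_Mapping.single m (Poly_Mapping.lookup g m))"
    by (rule sum.cong) (auto simp: lookup_add lr gh)
  also have "\<dots> = g" by (rule pm_expand[symmetric])
  finally show ?thesis using ne by simp
qed

definition MM :: "nat \<Rightarrow> nat set \<Rightarrow> (nat \<Rightarrow>\<^sub>0 nat) set" where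
  "MM d I = {m. Poly_Mapping.keys m \<subseteq> I \<and> mdeg m = d}"

lemma MM_empty: "MM d {} = (if d = 0 then {0} else {})"
  by (auto simp: MM_def)

lemma MM_insert:
  assumes l: "l \<notin> I"
  shows "MM d (insert l I) = (\<lambda>(j,m). m + Poly_Mapping.single l j) ` (SIGMA j:{..d}. MM (d-j) I)"
    and "inj_on (\<lambda>(j,m). m + Poly_Mapping.single l j) (SIGMA j:{..d}. MM (d-j) I)"
proof -
  show "MM d (insert l I) = (\<lambda>(j,m). m + Poly_Mapping.single l j) ` (SIGMA j:{..d}. MM (d-j) I)"
  proof
    show "(\<lambda>(j,m). m + Poly_Mapping.single l j) ` (SIGMA j:{..d}. MM (d-j) I) \<subseteq> MM d (insert l I)"
    proof (rule image_subsetI)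
      fix x assume "x \<in> (SIGMA j:{..d}. MM (d-j) I)"
      then obtain j m where jm: "x = (j,m)" "j \<le> d" "m \<in> MM (d-j) I" by auto
      then show "(\<lambda>(j,m). m + Poly_Mapping.single l j) x \<in> MM d (insert l I)"
        using keys_add[of m "Poly_Mapping.single l j"]
        by (auto simp: MM_def mdeg_add split: if_splits)
    qed
    show "MM d (insert l I) \<subseteq> (\<lambda>(j,m). m + Poly_Mapping.single l j) ` (SIGMA j:{..d}. MM (d-j) I)"
    proof
      fix m assume m: "m \<in> MM d (insert l I)"
      define j where "j = Poly_Mapping.lookup m l"
      define m' where "m' = Poly_Mapping.update l 0 m"
      have eq: "m = m' + Poly_Mapping.single l j"
        by (rule poly_mapping_eqI) (auto simp: m'_def j_def lookup_add lookup_update lookup_single when_def)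
      have k': "Poly_Mapping.keys m' \<subseteq> I" using m by (auto simp: m'_def keys_update MM_def)
      have "mdeg m = mdeg m' + j" using eq mdeg_add by (metis mdeg_single)
      then have "j \<le> d" "mdeg m' = d - j" using m by (auto simp: MM_def)
      then show "m \<in> (\<lambda>(j,m). m + Poly_Mapping.single l j) ` (SIGMA j:{..d}. MM (d-j) I)"
        using eq k' by (auto simp: MM_def intro!: image_eqI[of _ _ "(j, m')"])
    qed
  qed
  show "inj_on (\<lambda>(j,m). m + Poly_Mapping.single l j) (SIGMA j:{..d}. MM (d-j) I)"
  proof (rule inj_onI)
    fix x y
    assume x: "x \<in> (SIGMA j:{..d}. MM (d-j) I)" and y: "y \<in> (SIGMA j:{..d}. MM (d-j) I)"
      and e0: "(\<lambda>(j,m). m + Poly_Mapping.single l j) x = (\<lambda>(j,m). m + Poly_Mapping.single l j) y"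
    obtain j m where jm: "x = (j,m)" "m \<in> MM (d-j) I" using x by auto
    obtain j' m' where jm': "y = (j',m')" "m' \<in> MM (d-j') I" using y by auto
    have e: "m + Poly_Mapping.single l j = m' + Poly_Mapping.single l j'" using e0 jm jm' by simp
    have z1: "Poly_Mapping.lookup m l = 0" "Poly_Mapping.lookup m' l = 0"
      using jm jm' l by (auto simp: MM_def in_keys_iff)
    have "Poly_Mapping.lookup (m + Poly_Mapping.single l j) l = Poly_Mapping.lookup (m' + Poly_Mapping.single l j') l"
      using e by simp
    then have jj: "j = j'" using z1 by (simp add: lookup_add)
    then show "x = y" using e jm jm' by simp
  qed
qed

lemma finite_MM: "finite I \<Longrightarrow> finite (MM d I)"
proof (induction I arbitrary: d rule: finite_induct)
  case empty then show ?case by (simp add: MM_empty)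
next
  case (insert l I) then show ?case by (simp add: MM_insert(1))
qed

definition lin :: "'a::comm_ring_1 \<Rightarrow> 'a fps" where "lin c = 1 + fps_const c * fps_X"
definition geo :: "'a::comm_ring_1 \<Rightarrow> 'a fps" where "geo c = Abs_fps (\<lambda>n. c ^ n)"

lemma lin_mult_nth: "(lin c * f) $ d = f $ d + (if d = 0 then 0 else c * f $ (d - 1))"
  by (simp add: lin_def distrib_right mult.assoc)

lemma lin_nth0 [simp]: "lin c $ 0 = 1"
  by (simp add: lin_def)

lemma geo_nth0 [simp]: "geo c $ 0 = 1"
  by (simp add: geo_def)

lemma geo_nth [simp]: "geo c $ n = c ^ n"
  by (simp add: geo_def)

lemma lin_geo: "lin (-c) * geo c = 1"
proof (rule fps_ext)
  fix n show "(lin (-c) * geo c) $ n = (1 :: 'a fps) $ n"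
    by (cases n) (simp_all add: lin_mult_nth)
qed

lemma prod_nth0: "(\<Prod>x\<in>A. f x) $ 0 = (\<Prod>x\<in>A. (f x :: 'a::comm_ring_1 fps) $ 0)"
  by (induction A rule: infinite_finite_induct) (simp_all add: fps_mult_nth)

lemma prod_lin_deg: "finite B \<Longrightarrow> card B < d \<Longrightarrow> (\<Prod>b\<in>B. lin (c b)) $ d = 0"
proof (induction B arbitrary: d rule: finite_induct)
  case empty then show ?case by simp
next
  case (insert b B)
  then have "card B < d" "card B < d - 1" "d \<noteq> 0" by auto
  then show ?case using insert by (simp add: lin_mult_nth)
qed

lemma prod_geo_nth: "finite I \<Longrightarrow> (\<Prod>l\<in>I. geo (z l)) $ d = (\<Sum>m\<in>MM d I. mon m z)"
proof (induction I arbitrary: d rule: finite_induct)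
  case empty then show ?case by (simp add: MM_empty)
next
  case (insert l I)
  have "(\<Prod>l\<in>insert l I. geo (z l)) $ d = (geo (z l) * (\<Prod>l\<in>I. geo (z l))) $ d"
    using insert by simp
  also have "\<dots> = (\<Sum>j\<in>{..d}. z l ^ j * (\<Sum>m\<in>MM (d-j) I. mon m z))"
    by (simp add: fps_mult_nth insert.IH atLeast0AtMost)
  also have "\<dots> = (\<Sum>j\<in>{..d}. \<Sum>m\<in>MM (d-j) I. mon (m + Poly_Mapping.single l j) z)"
    by (simp add: sum_distrib_left mon_add mult.commute)
  also have "\<dots> = (\<Sum>(j,m)\<in>(SIGMA j:{..d}. MM (d-j) I). mon (m + Poly_Mapping.single l j) z)"
    by (rule sum.Sigma) (auto intro: finite_MM insert.hyps)
  also have "\<dots> = (\<Sum>m\<in>MM d (insert l I). mon m z)"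
    using sum.reindex[OF MM_insert(2)[OF insert.hyps(2)], of "\<lambda>m. mon m z"] MM_insert(1)[OF insert.hyps(2)]
    by (simp add: case_prod_beta comp_def)
  finally show ?case .
qed

lemma subsets_insert_split:
  assumes "finite I" "l \<notin> I"
  shows "{S. S \<subseteq> insert l I \<and> card S = Suc e} =
     {S. S \<subseteq> I \<and> card S = Suc e} \<union> insert l ` {S. S \<subseteq> I \<and> card S = e}"
proof
  show "{S. S \<subseteq> insert l I \<and> card S = Suc e} \<subseteq>
     {S. S \<subseteq> I \<and> card S = Suc e} \<union> insert l ` {S. S \<subseteq> I \<and> card S = e}"
  proof
    fix S assume S: "S \<in> {S. S \<subseteq> insert l I \<and> card S = Suc e}"
    then have fS: "finite S" using assms finite_subset by blast
    show "S \<in> {S. S \<subseteq> I \<and> card S = Suc e} \<union> insert l ` {S. S \<subseteq> I \<and> card S = e}"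
    proof (cases "l \<in> S")
      case True
      then have "S = insert l (S - {l})" by auto
      moreover have "S - {l} \<subseteq> I" "card (S - {l}) = e" using S True fS by auto
      ultimately show ?thesis by blast
    next
      case False then show ?thesis using S by auto
    qed
  qed
  show "{S. S \<subseteq> I \<and> card S = Suc e} \<union> insert l ` {S. S \<subseteq> I \<and> card S = e}
      \<subseteq> {S. S \<subseteq> insert l I \<and> card S = Suc e}"
    using assms by (auto intro!: card_insert_disjoint finite_subset[of _ I])
qed

lemma prod_lin_nth: "finite I \<Longrightarrow> (\<Prod>l\<in>I. lin (z l)) $ d = (\<Sum>S\<in>{S. S \<subseteq> I \<and> card S = d}. \<Prod>l\<in>S. z l)"
proof (induction I arbitrary: d rule: finite_induct)
  case empty
  have e: "{S. S \<subseteq> {} \<and> card S = d} = (if d = 0 then {{}} else {})" by auto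
  show ?case by (subst e) simp
next
  case (insert l I)
  have z0: "{S. S \<subseteq> J \<and> card S = 0} = {{}}" if "finite J" for J
    using that by (auto dest: finite_subset)
  have e1: "(\<Prod>l\<in>insert l I. lin (z l)) $ d = (\<Prod>l\<in>I. lin (z l)) $ d +
       (if d = 0 then 0 else z l * (\<Prod>l\<in>I. lin (z l)) $ (d - 1))"
    using insert by (simp add: lin_mult_nth)
  show ?case
  proof (cases d)
    case 0 then show ?thesis using e1 insert z0[of I] z0[of "insert l I"] by simp
  next
    case (Suc e)
    have fin: "finite {S. S \<subseteq> I \<and> card S = x}" for x using insert by simp
    have inj: "inj_on (insert l) {S. S \<subseteq> I \<and> card S = e}"
      using insert.hyps(2) by (auto simp: inj_on_def)
    have "(\<Sum>S\<in>{S. S \<subseteq> insert l I \<and> card S = d}. \<Prod>l\<in>S. z l) =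
        (\<Sum>S\<in>{S. S \<subseteq> I \<and> card S = Suc e}. \<Prod>l\<in>S. z l) + (\<Sum>S\<in>insert l ` {S. S \<subseteq> I \<and> card S = e}. \<Prod>l\<in>S. z l)"
      unfolding Suc subsets_insert_split[OF insert.hyps]
      by (rule sum.union_disjoint) (use fin insert.hyps(2) in auto)
    also have "(\<Sum>S\<in>insert l ` {S. S \<subseteq> I \<and> card S = e}. \<Prod>l\<in>S. z l) =
        (\<Sum>S\<in>{S. S \<subseteq> I \<and> card S = e}. z l * (\<Prod>l\<in>S. z l))"
      proof (subst sum.reindex[OF inj], rule sum.cong)
      fix x assume "x \<in> {S. S \<subseteq> I \<and> card S = e}"
      then have "finite x" "l \<notin> x" using insert.hyps finite_subset by auto
      then show "((\<lambda>S. \<Prod>l\<in>S. z l) \<circ> insert l) x = z l * (\<Prod>l\<in>x. z l)" by simp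
    qed simp
    finally show ?thesis using e1 insert.IH Suc by (simp add: sum_distrib_left)
  qed
qed

lemma MM_fin_i: "finite (MM d {1..i})" by (rule finite_MM) simp

lemma lookup_hsym: "Poly_Mapping.lookup (hsym d i :: 'a::field mpoly) m = (if m \<in> MM d {1..i} then 1 else 0)"
proof -
  have "(hsym d i :: 'a mpoly) = (\<Sum>m\<in>MM d {1..i}. Poly_Mapping.single m 1)"
    by (simp add: hsym_def MM_def)
  then show ?thesis using MM_fin_i[of d i]
    by (simp add: lookup_sum lookup_single when_def)
qed

lemma keys_hsym: "Poly_Mapping.keys (hsym d i :: 'a::field mpoly) = MM d {1..i}"
  by (auto simp: in_keys_iff lookup_hsym split: if_splits)

lemma eval_hsym: "eval (hsym d i :: 'a::field mpoly) z = (\<Sum>m\<in>MM d {1..i}. mon m z)"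
proof -
  have "(hsym d i :: 'a mpoly) = (\<Sum>m\<in>MM d {1..i}. Poly_Mapping.single m 1)"
    by (simp add: hsym_def MM_def)
  then show ?thesis by (simp add: eval_sum)
qed

lemma keys_sum_sub:
  assumes "\<And>j. j \<in> JJ \<Longrightarrow> Poly_Mapping.keys (f j) \<subseteq> K"
  shows "Poly_Mapping.keys (\<Sum>j\<in>JJ. f j) \<subseteq> K"
  using keys_sum[of f JJ] assms by blast


definition ind :: "nat set \<Rightarrow> (nat \<Rightarrow>\<^sub>0 nat)" where
  "ind S = (\<Sum>i\<in>S. Poly_Mapping.single i 1)"

lemma prod_Var: "(\<Prod>i\<in>S. Var i) = (Poly_Mapping.single (ind S) 1 :: 'a::comm_ring_1 mpoly)"
  by (induction S rule: infinite_finite_induct) (simp_all add: ind_def Var_def mult_single)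

lemma lookup_ind: "finite S \<Longrightarrow> Poly_Mapping.lookup (ind S) j = (if j \<in> S then 1 else 0)"
  by (simp add: ind_def lookup_sum lookup_single when_def)

lemma keys_ind: "finite S \<Longrightarrow> Poly_Mapping.keys (ind S) = S"
  by (auto simp: in_keys_iff lookup_ind split: if_splits)

lemma mdeg_ind: "mdeg (ind S) = card S"
  by (induction S rule: infinite_finite_induct) (simp_all add: ind_def mdeg_add)

definition ES :: "nat \<Rightarrow> nat \<Rightarrow> nat set set" where
  "ES d n = {S. S \<subseteq> {1..n} \<and> card S = d}"

lemma finite_ES: "finite (ES d n)"
  unfolding ES_def by (rule finite_subset[of _ "Pow {1..n}"]) auto

lemma esym_alt: "esym d n = (\<Sum>S\<in>ES d n. Poly_Mapping.single (ind S) 1)"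
  by (simp only: esym_def ES_def prod_Var)

lemma keys_esym: "Poly_Mapping.keys (esym d n) \<subseteq> ind ` ES d n"
  unfolding esym_alt by (rule keys_sum_sub) auto

lemma eval_esym: "eval (esym d n) z = (\<Sum>S\<in>ES d n. \<Prod>i\<in>S. z i)"
  by (simp only: esym_def ES_def eval_sum eval_prod eval_Var)

lemma esym_nonzero:
  assumes "d \<le> n"
  shows "(esym d n :: 'a::field mpoly) \<noteq> 0"
proof -
  have mem: "{1..d} \<in> ES d n" using assms by (auto simp: ES_def)
  have fES: "finite S" if "S \<in> ES d n" for S
    using that finite_subset[of S "{1..n}"] unfolding ES_def by auto
  have eqv: "(ind S = ind {1..d}) = (S = {1..d})" if "S \<in> ES d n" for S
  proof
    assume "ind S = ind {1..d}"
    then have "Poly_Mapping.keys (ind S) = Poly_Mapping.keys (ind {1..d})" by simp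
    then show "S = {1..d}" using keys_ind[OF fES[OF that]] keys_ind[of "{1..d}"] by simp
  qed simp
  have "Poly_Mapping.lookup (esym d n :: 'a mpoly) (ind {1..d}) =
        (\<Sum>S\<in>ES d n. if S = {1..d} then 1 else 0)"
    unfolding esym_alt lookup_sum
  proof (rule sum.cong)
    fix S assume S: "S \<in> ES d n"
    show "Poly_Mapping.lookup (Poly_Mapping.single (ind S) (1::'a)) (ind {1..d}) = (if S = {1..d} then 1 else 0)"
      unfolding lookup_single when_def eqv[OF S] by (rule refl)
  qed (rule refl)
  also have "\<dots> = 1" using mem finite_ES by (simp only: sum.delta) simp
  finally show ?thesis by (metis lookup_zero one_neq_zero)
qed
lemma hsym_in_T:
  fixes \<alpha> :: "nat \<Rightarrow> 'a::field"
  assumes k1: "1 \<le> k" and kn: "k \<le> n" and inj: "inj_on \<alpha> {1..n+k-1}" and i: "i \<in> {1..n}"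
  shows "(hsym k i :: 'a mpoly) \<in> tau ` (vanishing_ideal n (Z n k \<alpha>) - {0})"
proof -
  define A where "A = \<alpha> ` {1..k+i-1}"
  define C where "C = (\<Prod>a\<in>A. lin (-a))"
  define r where "r = (\<Sum>j\<in>{1..k}. Poly_Mapping.single 0 (C $ j) * (hsym (k-j) i :: 'a mpoly))"
  define f where "f = (\<Sum>j\<in>{0..k}. Poly_Mapping.single 0 (C $ j) * (hsym (k-j) i :: 'a mpoly))"
  have C0: "C $ 0 = 1" by (simp add: C_def prod_nth0)
  have fsplit: "f = hsym k i + r"
    unfolding f_def r_def by (simp add: sum.atLeast_Suc_atMost C0)
  have rk: "mdeg m < k" if mr: "m \<in> Poly_Mapping.keys r" for m
  proof -
    have "Poly_Mapping.keys r \<subseteq> (\<Union>j\<in>{1..k}. MM (k-j) {1..i})"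
      unfolding r_def by (rule keys_sum_sub, rule order_trans[OF keys_cmult]) (auto simp: keys_hsym)
    then obtain j where "j \<in> {1..k}" "m \<in> MM (k-j) {1..i}" using mr by blast
    then show ?thesis using k1 by (auto simp: MM_def)
  qed
  have gk: "mdeg m = k" if "m \<in> Poly_Mapping.keys (hsym k i :: 'a mpoly)" for m
    using that by (simp add: keys_hsym MM_def)
  have g0: "(hsym k i :: 'a mpoly) \<noteq> 0"
  proof
    assume h: "(hsym k i :: 'a mpoly) = 0"
    have "Poly_Mapping.single 1 k \<in> MM k {1..i}" using i by (auto simp: MM_def)
    then show False using keys_hsym[of k i, where 'a='a] h by simp
  qed
  have tf: "tau f = hsym k i \<and> f \<noteq> 0" unfolding fsplit by (rule tau_top[OF g0 gk rk])
  have Pn: "f \<in> Pn n"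
  proof -
    have "Poly_Mapping.keys f \<subseteq> (\<Union>j\<in>{0..k}. MM (k-j) {1..i})"
      unfolding f_def by (rule keys_sum_sub, rule order_trans[OF keys_cmult]) (auto simp: keys_hsym)
    then show ?thesis using i by (fastforce simp: Pn_def MM_def)
  qed
  have ev: "eval f z = 0" if z: "z \<in> Z n k \<alpha>" for z
  proof -
    define G where "G = (\<Prod>l\<in>{1..i}. geo (z l))"
    have zA: "z ` {1..i} \<subseteq> A"
    proof
      fix x assume "x \<in> z ` {1..i}"
      then obtain j where j: "j \<in> {1..i}" "x = z j" by auto
      then have "z j \<in> \<alpha> ` {1..k+j-1}" using z i by (auto simp: Z_def)
      then show "x \<in> A" using j unfolding A_def by auto
    qed
    have injz: "inj_on z {1..i}" using z i by (auto simp: Z_def intro: inj_on_subset)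
    have "eval f z = (\<Sum>j\<in>{0..k}. C $ j * G $ (k - j))"
      unfolding f_def G_def by (simp add: eval_sum eval_hsym prod_geo_nth)
    also have "\<dots> = (C * G) $ k" by (simp add: fps_mult_nth)
    also have "C * G = (\<Prod>a\<in>A - z ` {1..i}. lin (-a))"
    proof -
      have "C = (\<Prod>a\<in>A - z ` {1..i}. lin (-a)) * (\<Prod>a\<in>z ` {1..i}. lin (-a))"
        unfolding C_def by (rule prod.subset_diff[OF zA]) (simp add: A_def)
      also have "(\<Prod>a\<in>z ` {1..i}. lin (-a)) = (\<Prod>l\<in>{1..i}. lin (- z l))"
        by (subst prod.reindex[OF injz]) (simp add: comp_def)
      finally have "C * G = (\<Prod>a\<in>A - z ` {1..i}. lin (-a)) * ((\<Prod>l\<in>{1..i}. lin (- z l)) * G)"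
        by (simp add: mult.assoc)
      also have "(\<Prod>l\<in>{1..i}. lin (- z l)) * G = 1"
        unfolding G_def prod.distrib[symmetric] by (simp add: lin_geo)
      finally show ?thesis by simp
    qed
    also have "(\<Prod>a\<in>A - z ` {1..i}. lin (-a)) $ k = 0"
    proof (rule prod_lin_deg)
      show "finite (A - z ` {1..i})" by (simp add: A_def)
      have "card A = card {1..k+i-1}" unfolding A_def
        by (rule card_image, rule inj_on_subset[OF inj]) (use i in auto)
      then have cA: "card A = k + i - 1" by simp
      have cz: "card (z ` {1..i}) = i" using card_image[OF injz] by simp
      have "card (A - z ` {1..i}) = card A - card (z ` {1..i})"
        by (rule card_Diff_subset[OF _ zA]) simp
      then show "card (A - z ` {1..i}) < k" using cA cz k1 i by auto
    qed
    finally show ?thesis .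
  qed
  have "f \<in> vanishing_ideal n (Z n k \<alpha>) - {0}" using Pn ev tf by (simp add: vanishing_ideal_def)
  then show ?thesis using tf by (metis image_eqI)
qed

lemma esym_in_T:
  fixes \<alpha> :: "nat \<Rightarrow> 'a::field"
  assumes k1: "1 \<le> k" and kn: "k \<le> n" and inj: "inj_on \<alpha> {1..n+k-1}" and d: "d \<in> {n-k+1..n}"
  shows "(esym d n :: 'a mpoly) \<in> tau ` (vanishing_ideal n (Z n k \<alpha>) - {0})"
proof -
  define C where "C = (\<Prod>m\<in>{1..k}. geo (- \<alpha> m))"
  define r where "r = (\<Sum>j\<in>{1..d}. Poly_Mapping.single 0 (C $ j) * (esym (d-j) n :: 'a mpoly))"
  define f where "f = (\<Sum>j\<in>{0..d}. Poly_Mapping.single 0 (C $ j) * (esym (d-j) n :: 'a mpoly))"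
  have d1: "1 \<le> d" "d \<le> n" using d kn by auto
  have C0: "C $ 0 = 1" by (simp add: C_def prod_nth0)
  have fsplit: "f = esym d n + r"
    unfolding f_def r_def by (simp add: sum.atLeast_Suc_atMost C0)
  have fES: "finite S" if "S \<in> ES e n" for S e
    using that finite_subset[of S "{1..n}"] unfolding ES_def by auto
  have rk: "mdeg m < d" if mr: "m \<in> Poly_Mapping.keys r" for m
  proof -
    have "Poly_Mapping.keys r \<subseteq> (\<Union>j\<in>{1..d}. ind ` ES (d-j) n)"
      unfolding r_def by (rule keys_sum_sub, rule order_trans[OF keys_cmult], rule order_trans[OF keys_esym]) auto
    then obtain j S where "j \<in> {1..d}" "S \<in> ES (d-j) n" "m = ind S" using mr by blast
    then show ?thesis using d1 by (auto simp: ES_def mdeg_ind)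
  qed
  have gk: "mdeg m = d" if "m \<in> Poly_Mapping.keys (esym d n :: 'a mpoly)" for m
    using that keys_esym[of d n, where 'a='a] by (auto simp: ES_def mdeg_ind)
  have g0: "(esym d n :: 'a mpoly) \<noteq> 0" using esym_nonzero d1 by blast
  have tf: "tau f = esym d n \<and> f \<noteq> 0" unfolding fsplit by (rule tau_top[OF g0 gk rk])
  have Pn: "f \<in> Pn n"
  proof -
    have "Poly_Mapping.keys f \<subseteq> (\<Union>j\<in>{0..d}. ind ` ES (d-j) n)"
      unfolding f_def by (rule keys_sum_sub, rule order_trans[OF keys_cmult], rule order_trans[OF keys_esym]) auto
    moreover have "Poly_Mapping.keys (ind S) \<subseteq> {1..n}" if "S \<in> ES e n" for S e
      using keys_ind[OF fES[OF that]] that by (simp add: ES_def)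
    ultimately show ?thesis unfolding Pn_def by blast
  qed
  have ev: "eval f z = 0" if z: "z \<in> Z n k \<alpha>" for z
  proof -
    define E where "E = (\<Prod>l\<in>{1..n}. lin (z l))"
    have injz: "inj_on z {1..n}" using z by (auto simp: Z_def)
    have az: "\<alpha> ` {1..k} \<subseteq> z ` {1..n}" using z by (auto simp: Z_def)
    have inja: "inj_on \<alpha> {1..k}" by (rule inj_on_subset[OF inj]) (use k1 kn in auto)
    have Ej: "E $ e = eval (esym e n :: 'a mpoly) z" for e
      unfolding E_def eval_esym ES_def by (rule prod_lin_nth) simp
    have "eval f z = (\<Sum>j\<in>{0..d}. C $ j * E $ (d - j))"
      by (simp only: f_def eval_sum eval_cmult Ej)
    also have "\<dots> = (C * E) $ d" by (simp add: fps_mult_nth)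
    also have "C * E = (\<Prod>b\<in>z ` {1..n} - \<alpha> ` {1..k}. lin b)"
    proof -
      have "E = (\<Prod>b\<in>z ` {1..n}. lin b)" unfolding E_def by (subst prod.reindex[OF injz]) (simp add: comp_def)
      also have "\<dots> = (\<Prod>b\<in>z ` {1..n} - \<alpha> ` {1..k}. lin b) * (\<Prod>b\<in>\<alpha> ` {1..k}. lin b)"
        by (rule prod.subset_diff[OF az]) simp
      also have "(\<Prod>b\<in>\<alpha> ` {1..k}. lin b) = (\<Prod>m\<in>{1..k}. lin (\<alpha> m))"
        by (subst prod.reindex[OF inja]) (simp add: comp_def)
      finally have "C * E = (\<Prod>b\<in>z ` {1..n} - \<alpha> ` {1..k}. lin b) * (C * (\<Prod>m\<in>{1..k}. lin (\<alpha> m)))"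
        by (simp add: ac_simps)
      also have "C * (\<Prod>m\<in>{1..k}. lin (\<alpha> m)) = 1"
      proof -
        have "geo (- \<alpha> m) * lin (\<alpha> m) = 1" for m
          using lin_geo[of "- \<alpha> m"] by (simp add: mult.commute)
        then show ?thesis unfolding C_def prod.distrib[symmetric] by simp
      qed
      finally show ?thesis by simp
    qed
    also have "(\<Prod>b\<in>z ` {1..n} - \<alpha> ` {1..k}. lin b) $ d = 0"
    proof (rule prod_lin_deg)
      show "finite (z ` {1..n} - \<alpha> ` {1..k})" by simp
      have cz: "card (z ` {1..n}) = n" using card_image[OF injz] by simp
      have ca: "card (\<alpha> ` {1..k}) = k" using card_image[OF inja] by simp
      have "card (z ` {1..n} - \<alpha> ` {1..k}) = card (z ` {1..n}) - card (\<alpha> ` {1..k})"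
        by (rule card_Diff_subset[OF _ az]) simp
      then show "card (z ` {1..n} - \<alpha> ` {1..k}) < d" using cz ca d by auto
    qed
    finally show ?thesis .
  qed
  have "f \<in> vanishing_ideal n (Z n k \<alpha>) - {0}" using Pn ev tf by (simp add: vanishing_ideal_def)
  then show ?thesis using tf by (metis image_eqI)
qed

theorem mainTheorem3:
  fixes n k :: nat and \<alpha> :: "nat \<Rightarrow> 'a::field"
  assumes "1 \<le> k" and "k \<le> n"
    and "inj_on \<alpha> {1..n+k-1}"
  shows "J n k \<subseteq> T n (Z n k \<alpha>)"
proof -
  have G: "(\<lambda>i. hsym k i :: 'a mpoly) ` {1..n} \<union> (\<lambda>d. esym d n) ` {n-k+1..n} \<subseteq> tau ` (vanishing_ideal n (Z n k \<alpha>) - {0})"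
    using hsym_in_T[OF assms] esym_in_T[OF assms] by blast
  show ?thesis
  proof
    fix p :: "'a mpoly" assume "p \<in> J n k"
    then obtain F c where p: "p = (\<Sum>g\<in>F. c g * g)" "finite F"
      "F \<subseteq> (\<lambda>i. hsym k i :: 'a mpoly) ` {1..n} \<union> (\<lambda>d. esym d n) ` {n-k+1..n}" "\<forall>g\<in>F. c g \<in> Pn n"
      unfolding J_def ideal_gen_def by blast
    have F: "F \<subseteq> tau ` (vanishing_ideal n (Z n k \<alpha>) - {0})" using p(3) G by (rule subset_trans)
    show "p \<in> T n (Z n k \<alpha>)" unfolding T_def ideal_gen_def
      using p(1,2,4) F by blast
  qed
qed

end
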